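(* Let $\varepsilon \neq 0$ and $\gamma \neq 0$ be real constants and consider the equation $$u_{tt}-\varepsilon\,\partial_t(u_{xx}+u_{yy})-\gamma\,(u_{xx}+u_{yy})=f,$$ regarded as a differential equation with independent variables $x,y,t$ and dependent variables $u,f$. A vector field $$V=\xi^1\partial_x+\xi^2\partial_y+\xi^3\partial_t+\phi_1\partial_u+\phi_2\partial_f,$$ with coefficients smooth functions of $(x,y,t,u,f)$, generates a one-parameter group of point symmetries of this equation if and only if $$\xi^1=c_1y+c_2,\quad \xi^2=-c_1x+c_3,\quad \xi^3=c_4,\quad \phi_1=c_5u+F(x,y,t),$$ $$\phi_2=c_5 f+F_{tt}-\varepsilon\,\partial_t(F_{xx}+F_{yy})-\gamma\,(F_{xx}+F_{yy}),$$ for some real constants $c_1,\dots,c_5$ and some smooth function $F(x,y,t)$.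
   Context: A vector field $V$ on the space of variables $(x,y,t,u,f)$ is an infinitesimal point symmetry of the equation if its third prolongation annihilates $u_{tt}-\varepsilon\partial_t(u_{xx}+u_{yy})-\gamma(u_{xx}+u_{yy})-f$ on the solution set of the equation (Lie's infinitesimal invariance criterion). *)

theory Defs
  imports "HOL-Analysis.Analysis"
begin

fun Ck :: "nat \<Rightarrow> ('a::real_normed_vector \<Rightarrow> 'b::real_normed_vector) \<Rightarrow> bool" where
  "Ck 0 g = continuous_on UNIV g"
| "Ck (Suc n) g = ((\<forall>p. g differentiable (at p)) \<and>
                    (\<forall>v. Ck n (\<lambda>p. frechet_derivative g (at p) v)))"

definition smooth :: "('a::real_normed_vector \<Rightarrow> 'b::real_normed_vector) \<Rightarrow> bool" where
  "smooth g = (\<forall>n. Ck n g)"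

type_synonym R3 = "real \<times> real \<times> real"          \<comment> \<open>(x,y,t): indices 0,1,2\<close>
type_synonym R5 = "real \<times> real \<times> real \<times> real \<times> real"  \<comment> \<open>(x,y,t,u,f)\<close>

text \<open>Jet coordinates: w alpha J is the derivative of dependent variable alpha
 (0 = u, 1 = f) with respect to the multi-index J (J i = number of derivatives
 in independent variable i, i = 0,1,2 for x,y,t).\<close>
type_synonym jet = "nat \<Rightarrow> (nat \<Rightarrow> nat) \<Rightarrow> real"
type_synonym jfun = "R3 \<Rightarrow> jet \<Rightarrow> real"

definition ev :: "nat \<Rightarrow> R3" where
  "ev i = (if i = 0 then (1,0,0) else if i = 1 then (0,1,0) else (0,0,1))"

definition mi :: "nat \<Rightarrow> nat \<Rightarrow> nat \<Rightarrow> (nat \<Rightarrow> nat)" where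
  "mi a b c = (\<lambda>i. if i = 0 then a else if i = 1 then b else if i = 2 then c else 0)"

definition mi0 :: "nat \<Rightarrow> nat" where "mi0 = mi 0 0 0"

definition addi :: "(nat \<Rightarrow> nat) \<Rightarrow> nat \<Rightarrow> (nat \<Rightarrow> nat)" where
  "addi J i = J(i := Suc (J i))"

definition mi_order :: "(nat \<Rightarrow> nat) \<Rightarrow> nat" where
  "mi_order J = J 0 + J 1 + J 2"

text \<open>D_i G = dG/dx_i + sum over (alpha,J) of w alpha (J+e_i) * dG/dw alpha J,
 written as the derivative of G along the total-derivative direction.\<close>
definition totD :: "nat \<Rightarrow> jfun \<Rightarrow> jfun" where
  "totD i G z w = deriv (\<lambda>s. G (z + s *\<^sub>R ev i) (\<lambda>\<alpha> J. w \<alpha> J + s * w \<alpha> (addi J i))) 0"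

definition totDJ :: "(nat \<Rightarrow> nat) \<Rightarrow> jfun \<Rightarrow> jfun" where
  "totDJ J G = (totD 0 ^^ J 0) ((totD 1 ^^ J 1) ((totD 2 ^^ J 2) G))"

definition basept :: "R3 \<Rightarrow> jet \<Rightarrow> R5" where
  "basept z w = (fst z, fst (snd z), snd (snd z), w 0 mi0, w 1 mi0)"

text \<open>A vector field xi^1 d_x + xi^2 d_y + xi^3 d_t + phi_1 d_u + phi_2 d_f is given by
 xi i (i = 0,1,2) and phi alpha (alpha = 0,1).\<close>
definition charQ :: "(nat \<Rightarrow> R5 \<Rightarrow> real) \<Rightarrow> (nat \<Rightarrow> R5 \<Rightarrow> real) \<Rightarrow> nat \<Rightarrow> jfun" where
  "charQ xi phi \<alpha> z w =
     phi \<alpha> (basept z w) - (\<Sum>i<3. xi i (basept z w) * w \<alpha> (addi mi0 i))"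

definition prol_coeff :: "(nat \<Rightarrow> R5 \<Rightarrow> real) \<Rightarrow> (nat \<Rightarrow> R5 \<Rightarrow> real) \<Rightarrow> nat \<Rightarrow> (nat \<Rightarrow> nat) \<Rightarrow> jfun" where
  "prol_coeff xi phi \<alpha> J z w =
     totDJ J (charQ xi phi \<alpha>) z w + (\<Sum>i<3. xi i (basept z w) * w \<alpha> (addi J i))"

definition xivec :: "(nat \<Rightarrow> R5 \<Rightarrow> real) \<Rightarrow> R3 \<Rightarrow> jet \<Rightarrow> R3" where
  "xivec xi z w = (xi 0 (basept z w), xi 1 (basept z w), xi 2 (basept z w))"

definition prolong_apply :: "nat \<Rightarrow> (nat \<Rightarrow> R5 \<Rightarrow> real) \<Rightarrow> (nat \<Rightarrow> R5 \<Rightarrow> real) \<Rightarrow> jfun \<Rightarrow> jfun" where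
  "prolong_apply n xi phi G z w =
     deriv (\<lambda>s. G (z + s *\<^sub>R xivec xi z w)
                  (\<lambda>\<alpha> J. w \<alpha> J + s * (if \<alpha> < 2 \<and> mi_order J \<le> n
                                         then prol_coeff xi phi \<alpha> J z w else 0))) 0"

definition is_point_symmetry :: "nat \<Rightarrow> jfun \<Rightarrow> (nat \<Rightarrow> R5 \<Rightarrow> real) \<Rightarrow> (nat \<Rightarrow> R5 \<Rightarrow> real) \<Rightarrow> bool" where
  "is_point_symmetry n \<Delta> xi phi =
     (\<forall>z w. \<Delta> z w = 0 \<longrightarrow> prolong_apply n xi phi \<Delta> z w = 0)"

definition eqn :: "real \<Rightarrow> real \<Rightarrow> jfun" where
  "eqn \<epsilon> \<gamma> z w =
     w 0 (mi 0 0 2) - \<epsilon> * (w 0 (mi 2 0 1) + w 0 (mi 0 2 1))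
       - \<gamma> * (w 0 (mi 2 0 0) + w 0 (mi 0 2 0)) - w 1 mi0"

definition vf :: "'a \<Rightarrow> 'a \<Rightarrow> 'a \<Rightarrow> nat \<Rightarrow> 'a" where
  "vf a b c = (\<lambda>i. if i = 0 then a else if i = 1 then b else c)"

definition pd :: "nat \<Rightarrow> (R3 \<Rightarrow> real) \<Rightarrow> R3 \<Rightarrow> real" where
  "pd i F z = deriv (\<lambda>s. F (z + s *\<^sub>R ev i)) 0"

end

theory Submission
  imports Defs
begin

lemma smooth_Ck: "smooth g \<Longrightarrow> Ck n g" by (simp add: smooth_def)

lemma smooth_differentiable: "smooth g \<Longrightarrow> g differentiable (at p)"
  using smooth_Ck[of g "Suc 0"] by simp

lemma smooth_has_fd: "smooth g \<Longrightarrow> (g has_derivative frechet_derivative g (at p)) (at p)"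
  using smooth_differentiable frechet_derivative_works by blast

lemma smooth_fd: "smooth g \<Longrightarrow> smooth (\<lambda>p. frechet_derivative g (at p) v)"
  unfolding smooth_def
proof
  fix n assume "\<forall>n. Ck n g"
  then have "Ck (Suc n) g" by blast
  then show "Ck n (\<lambda>p. frechet_derivative g (at p) v)" by simp
qed

lemma smooth_isCont: "smooth g \<Longrightarrow> isCont g p"
  using smooth_Ck[of g 0] by (simp add: continuous_on_eq_continuous_at)

lemma smooth_linear_fd: "smooth g \<Longrightarrow> linear (frechet_derivative g (at p))"
  using smooth_differentiable linear_frechet_derivative by blast

lemma line_deriv:
  fixes g :: "'a::real_normed_vector \<Rightarrow> real"
  assumes "smooth g"
  shows "((\<lambda>s. g (q + s *\<^sub>R u)) has_real_derivative frechet_derivative g (at (q + s *\<^sub>R u)) u) (at s)"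
proof -
  have d: "(g has_derivative frechet_derivative g (at (q + s *\<^sub>R u))) (at (q + s *\<^sub>R u))"
    using smooth_has_fd[OF assms] .
  have l: "((\<lambda>s. q + s *\<^sub>R u) has_derivative (\<lambda>h. h *\<^sub>R u)) (at s)"
    by (auto intro!: derivative_eq_intros)
  have c: "((g \<circ> (\<lambda>s. q + s *\<^sub>R u)) has_derivative (frechet_derivative g (at (q + s *\<^sub>R u)) \<circ> (\<lambda>h. h *\<^sub>R u))) (at s)"
    by (rule diff_chain_at[OF l]) (simp add: d)
  have lin: "linear (frechet_derivative g (at (q + s *\<^sub>R u)))"
    using smooth_linear_fd[OF assms] .
  have e: "(frechet_derivative g (at (q + s *\<^sub>R u)) \<circ> (\<lambda>h. h *\<^sub>R u)) = (*) (frechet_derivative g (at (q + s *\<^sub>R u)) u)"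
    by (rule ext) (simp add: linear_cmul[OF lin])
  show ?thesis using c unfolding e has_field_derivative_def by (simp add: o_def)
qed

lemma delta_formula:
  fixes g :: "'a::real_normed_vector \<Rightarrow> real"
  assumes g: "smooth g" and h: "h > 0"
  shows "\<exists>\<sigma> \<rho>. 0 < \<sigma> \<and> \<sigma> < h \<and> 0 < \<rho> \<and> \<rho> < h \<and>
     g (p + h *\<^sub>R u + h *\<^sub>R v) - g (p + h *\<^sub>R u) - g (p + h *\<^sub>R v) + g p
       = h * h * frechet_derivative (\<lambda>q. frechet_derivative g (at q) u) (at (p + \<sigma> *\<^sub>R u + \<rho> *\<^sub>R v)) v"
proof -
  define A where "A = (\<lambda>q. frechet_derivative g (at q) u)"
  have As: "smooth A" unfolding A_def by (rule smooth_fd[OF g])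
  define phi where "phi = (\<lambda>s. g ((p + h *\<^sub>R v) + s *\<^sub>R u) - g (p + s *\<^sub>R u))"
  have dphi: "DERIV phi s :> (A ((p + h *\<^sub>R v) + s *\<^sub>R u) - A (p + s *\<^sub>R u))" for s
    unfolding phi_def A_def
    by (intro DERIV_diff line_deriv[OF g])
  obtain \<sigma> where s: "0 < \<sigma>" "\<sigma> < h" and sv: "phi h - phi 0 = (h - 0) * (A ((p + h *\<^sub>R v) + \<sigma> *\<^sub>R u) - A (p + \<sigma> *\<^sub>R u))"
    using MVT2[OF h, of phi "\<lambda>s. A ((p + h *\<^sub>R v) + s *\<^sub>R u) - A (p + s *\<^sub>R u)"] dphi by blast
  define psi where "psi = (\<lambda>r. A ((p + \<sigma> *\<^sub>R u) + r *\<^sub>R v))"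
  have dpsi: "DERIV psi r :> frechet_derivative A (at ((p + \<sigma> *\<^sub>R u) + r *\<^sub>R v)) v" for r
    unfolding psi_def by (rule line_deriv[OF As])
  obtain \<rho> where r: "0 < \<rho>" "\<rho> < h" and rv: "psi h - psi 0 = (h - 0) * frechet_derivative A (at ((p + \<sigma> *\<^sub>R u) + \<rho> *\<^sub>R v)) v"
    using MVT2[OF h, of psi "\<lambda>r. frechet_derivative A (at ((p + \<sigma> *\<^sub>R u) + r *\<^sub>R v)) v"] dpsi by blast
  have "g (p + h *\<^sub>R u + h *\<^sub>R v) - g (p + h *\<^sub>R u) - g (p + h *\<^sub>R v) + g p = phi h - phi 0"
    unfolding phi_def by (simp add: algebra_simps)
  also have "\<dots> = h * (psi h - psi 0)"
    using sv unfolding psi_def by (simp add: algebra_simps)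
  also have "\<dots> = h * h * frechet_derivative A (at (p + \<sigma> *\<^sub>R u + \<rho> *\<^sub>R v)) v"
    using rv by simp
  finally show ?thesis using s r unfolding A_def by blast
qed

lemma schwarz:
  fixes g :: "'a::real_normed_vector \<Rightarrow> real"
  assumes g: "smooth g"
  shows "frechet_derivative (\<lambda>q. frechet_derivative g (at q) u) (at p) v
       = frechet_derivative (\<lambda>q. frechet_derivative g (at q) v) (at p) u"
proof (rule ccontr)
  define Av where "Av = (\<lambda>x. frechet_derivative (\<lambda>q. frechet_derivative g (at q) u) (at x) v)"
  define Bu where "Bu = (\<lambda>x. frechet_derivative (\<lambda>q. frechet_derivative g (at q) v) (at x) u)"
  have cA: "isCont Av p" unfolding Av_def by (intro smooth_isCont smooth_fd g)
  have cB: "isCont Bu p" unfolding Bu_def by (intro smooth_isCont smooth_fd g)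
  assume ne: "\<not> ?thesis"
  define d where "d = \<bar>Av p - Bu p\<bar>"
  have d: "d > 0" using ne unfolding d_def Av_def Bu_def by simp
  obtain d1 where d1: "d1 > 0" "\<And>x. dist x p < d1 \<Longrightarrow> dist (Av x) (Av p) < d/2"
    using cA d unfolding continuous_at_eps_delta by (meson half_gt_zero)
  obtain d2 where d2: "d2 > 0" "\<And>x. dist x p < d2 \<Longrightarrow> dist (Bu x) (Bu p) < d/2"
    using cB d unfolding continuous_at_eps_delta by (meson half_gt_zero)
  define h where "h = min d1 d2 / (norm u + norm v + 1)"
  have nn: "norm u + norm v + 1 > 0" by (simp add: add_nonneg_pos)
  have h: "h > 0" unfolding h_def using d1 d2 nn by simp
  have hb: "h * (norm u + norm v) < min d1 d2"
  proof -
    have "h * (norm u + norm v) < h * (norm u + norm v + 1)" using h by simp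
    also have "\<dots> = min d1 d2" unfolding h_def using nn by simp
    finally show ?thesis .
  qed
  have close: "dist (p + s *\<^sub>R u + r *\<^sub>R v) p < min d1 d2" if "0 < s" "s < h" "0 < r" "r < h" for s r
  proof -
    have "dist (p + s *\<^sub>R u + r *\<^sub>R v) p = norm (s *\<^sub>R u + r *\<^sub>R v)" by (simp add: dist_norm)
    also have "\<dots> \<le> norm (s *\<^sub>R u) + norm (r *\<^sub>R v)" by (rule norm_triangle_ineq)
    also have "\<dots> = s * norm u + r * norm v" using that by simp
    also have "\<dots> \<le> h * norm u + h * norm v" using that
      by (intro add_mono mult_right_mono) auto
    also have "\<dots> < min d1 d2" using hb by (simp add: algebra_simps)
    finally show ?thesis .
  qed
  obtain s1 r1 where sr1: "0 < s1" "s1 < h" "0 < r1" "r1 < h" and e1: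
    "g (p + h *\<^sub>R u + h *\<^sub>R v) - g (p + h *\<^sub>R u) - g (p + h *\<^sub>R v) + g p = h * h * Av (p + s1 *\<^sub>R u + r1 *\<^sub>R v)"
    using delta_formula[OF g h, of p u v] unfolding Av_def by blast
  obtain s2 r2 where sr2: "0 < s2" "s2 < h" "0 < r2" "r2 < h" and e2:
    "g (p + h *\<^sub>R v + h *\<^sub>R u) - g (p + h *\<^sub>R v) - g (p + h *\<^sub>R u) + g p = h * h * Bu (p + s2 *\<^sub>R v + r2 *\<^sub>R u)"
    using delta_formula[OF g h, of p v u] unfolding Bu_def by blast
  have "h * h * Av (p + s1 *\<^sub>R u + r1 *\<^sub>R v) = h * h * Bu (p + s2 *\<^sub>R v + r2 *\<^sub>R u)"
    using e1 e2 by (simp add: algebra_simps)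
  then have eq: "Av (p + s1 *\<^sub>R u + r1 *\<^sub>R v) = Bu (p + r2 *\<^sub>R u + s2 *\<^sub>R v)"
    using h by (simp add: algebra_simps)
  have a1: "dist (Av (p + s1 *\<^sub>R u + r1 *\<^sub>R v)) (Av p) < d/2"
    using d1(2) close[OF sr1] by simp
  have b1: "dist (Bu (p + r2 *\<^sub>R u + s2 *\<^sub>R v)) (Bu p) < d/2"
    using d2(2) close[of r2 s2] sr2 by simp
  have "d \<le> dist (Av (p + s1 *\<^sub>R u + r1 *\<^sub>R v)) (Av p) + dist (Bu (p + r2 *\<^sub>R u + s2 *\<^sub>R v)) (Bu p)"
    using eq unfolding d_def dist_real_def by linarith
  then show False using a1 b1 by linarith
qed

definition e5 :: "nat \<Rightarrow> R5" where
  "e5 k = (if k = 0 then (1,0,0,0,0) else if k = 1 then (0,1,0,0,0) else if k = 2 then (0,0,1,0,0)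
           else if k = 3 then (0,0,0,1,0) else (0,0,0,0,1))"

definition Dk :: "nat \<Rightarrow> (R5 \<Rightarrow> real) \<Rightarrow> R5 \<Rightarrow> real" where
  "Dk k g = (\<lambda>p. frechet_derivative g (at p) (e5 k))"

fun dsem :: "nat list \<Rightarrow> (R5 \<Rightarrow> real) \<Rightarrow> R5 \<Rightarrow> real" where
  "dsem [] g = g"
| "dsem (k # ds) g = Dk k (dsem ds g)"

lemma smooth_Dk: "smooth g \<Longrightarrow> smooth (Dk k g)"
  unfolding Dk_def by (rule smooth_fd)

lemma smooth_dsem: "smooth g \<Longrightarrow> smooth (dsem ds g)"
  by (induction ds) (auto intro: smooth_Dk)

lemma Dk_swap: "smooth g \<Longrightarrow> Dk k (Dk l g) = Dk l (Dk k g)"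
  unfolding Dk_def by (rule ext) (rule schwarz)

lemma Dk_dsem_insort: "smooth g \<Longrightarrow> Dk k (dsem ds g) = dsem (insort k ds) g"
proof (induction ds)
  case Nil then show ?case by simp
next
  case (Cons d ds)
  show ?case
  proof (cases "k \<le> d")
    case True then show ?thesis by simp
  next
    case False
    have "Dk k (dsem (d # ds) g) = Dk k (Dk d (dsem ds g))" by simp
    also have "\<dots> = Dk d (Dk k (dsem ds g))" by (rule Dk_swap) (rule smooth_dsem[OF Cons.prems])
    also have "\<dots> = Dk d (dsem (insort k ds) g)" using Cons by simp
    finally show ?thesis using False by simp
  qed
qed

lemma fd_expand:
  assumes "smooth g"
  shows "frechet_derivative g (at p) (a,b,c,d,e) =
     a * Dk 0 g p + b * Dk 1 g p + c * Dk 2 g p + d * Dk 3 g p + e * Dk 4 g p"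
proof -
  have lin: "linear (frechet_derivative g (at p))" by (rule smooth_linear_fd[OF assms])
  have v: "(a,b,c,d,e) = a *\<^sub>R e5 0 + b *\<^sub>R e5 1 + c *\<^sub>R e5 2 + d *\<^sub>R e5 3 + e *\<^sub>R e5 4"
    by (simp add: e5_def)
  show ?thesis unfolding v Dk_def by (simp add: linear_add[OF lin] linear_cmul[OF lin])
qed

type_synonym mono = "(nat \<times> nat \<times> nat \<times> nat) list"
type_synonym trm = "real \<times> (nat \<times> nat list) \<times> mono"

fun msem :: "mono \<Rightarrow> jet \<Rightarrow> real" where
  "msem [] w = 1"
| "msem ((al,a,b,c) # m) w = w al (mi a b c) * msem m w"

definition shiftm :: "nat \<Rightarrow> nat \<times> nat \<times> nat \<times> nat \<Rightarrow> nat \<times> nat \<times> nat \<times> nat" where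
  "shiftm i x = (case x of (al,a,b,c) \<Rightarrow>
      if i = 0 then (al, a + 1, b, c) else if i = 1 then (al, a, b + 1, c) else (al, a, b, c + 1))"

fun DM :: "nat \<Rightarrow> mono \<Rightarrow> mono list" where
  "DM i [] = []"
| "DM i (x # m) = (shiftm i x # m) # map (Cons x) (DM i m)"

definition tsem :: "(nat \<Rightarrow> R5 \<Rightarrow> real) \<Rightarrow> trm \<Rightarrow> jfun" where
  "tsem B t z w = (case t of (r,(k,ds),m) \<Rightarrow> r * dsem ds (B k) (basept z w) * msem m w)"

definition evalT :: "(nat \<Rightarrow> R5 \<Rightarrow> real) \<Rightarrow> trm list \<Rightarrow> jfun" where
  "evalT B P z w = sum_list (map (\<lambda>t. tsem B t z w) P)"

fun DT :: "nat \<Rightarrow> trm \<Rightarrow> trm list" where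
  "DT i (r,(k,ds),m) = [(r,(k,insort i ds),m), (r,(k,insort 3 ds), shiftm i (0,0,0,0) # m),
       (r,(k,insort 4 ds), shiftm i (1,0,0,0) # m)] @ map (\<lambda>m'. (r,(k,ds),m')) (DM i m)"

definition DP :: "nat \<Rightarrow> trm list \<Rightarrow> trm list" where
  "DP i P = concat (map (DT i) P)"

lemma mi_app: "mi a b c 0 = a" "mi a b c (Suc 0) = b" "mi a b c 1 = b" "mi a b c 2 = c"
  by (simp_all add: mi_def)

lemma addi_mi: "addi (mi a b c) 0 = mi (Suc a) b c" "addi (mi a b c) (Suc 0) = mi a (Suc b) c"
   "addi (mi a b c) 2 = mi a b (Suc c)"
  by (auto simp: addi_def mi_def fun_eq_iff)

lemma addi_shiftm: "i < 3 \<Longrightarrow> w al (addi (mi a b c) i) = (case shiftm i (al,a,b,c) of (al',a',b',c') \<Rightarrow> w al' (mi a' b' c'))"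
proof -
  assume "i < 3"
  then have "i = 0 \<or> i = 1 \<or> i = 2" by auto
  then show ?thesis by (auto simp: shiftm_def addi_mi)
qed

lemma sum_list_map_mult_right: "(\<Sum>x\<leftarrow>L. f x * (k::real)) = (\<Sum>x\<leftarrow>L. f x) * k"
  by (induction L) (auto simp: algebra_simps)

lemma msem_path:
  assumes i: "i < 3"
  shows "((\<lambda>s. msem m (\<lambda>al J. w al J + s * w al (addi J i))) has_real_derivative
           sum_list (map (\<lambda>m'. msem m' w) (DM i m))) (at 0)"
proof (induction m)
  case Nil then show ?case by simp
next
  case (Cons x m)
  obtain al a b c where x: "x = (al,a,b,c)" by (cases x) auto
  have d1: "((\<lambda>s. w al (mi a b c) + s * w al (addi (mi a b c) i)) has_real_derivative w al (addi (mi a b c) i)) (at 0)"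
    by (auto intro!: derivative_eq_intros)
  have "((\<lambda>s. (w al (mi a b c) + s * w al (addi (mi a b c) i)) * msem m (\<lambda>al J. w al J + s * w al (addi J i)))
        has_real_derivative w al (addi (mi a b c) i) * msem m w
           + w al (mi a b c) * sum_list (map (\<lambda>m'. msem m' w) (DM i m))) (at 0)"
    using DERIV_mult[OF d1 Cons.IH] by (simp add: mult.commute)
  moreover have "w al (addi (mi a b c) i) = msem [shiftm i x] w"
    using addi_shiftm[OF i] x by (auto simp: shiftm_def split: prod.splits)
  moreover have "msem (shiftm i x # m) w = msem [shiftm i x] w * msem m w"
    by (cases "shiftm i x") auto
  ultimately show ?case using x
    by (simp add: sum_list_map_mult_right o_def algebra_simps)
qed

lemma basept_path:
  assumes i: "i < 3"
  shows "basept (z + s *\<^sub>R ev i) (\<lambda>al J. w al J + s * w al (addi J i)) =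
    basept z w + s *\<^sub>R (fst (ev i), fst (snd (ev i)), snd (snd (ev i)), w 0 (addi mi0 i), w 1 (addi mi0 i))"
  by (cases z) (simp add: basept_def algebra_simps)

lemma w_addi_mi0: "i < 3 \<Longrightarrow> w al (addi mi0 i) = msem [shiftm i (al,0,0,0)] w"
  using addi_shiftm[of i w al 0 0 0] by (simp add: mi0_def shiftm_def split: prod.splits)

lemma csem_path:
  assumes i: "i < 3" and G: "smooth G"
  shows "((\<lambda>s. G (basept (z + s *\<^sub>R ev i) (\<lambda>al J. w al J + s * w al (addi J i)))) has_real_derivative
     (Dk i G (basept z w) + msem [shiftm i (0,0,0,0)] w * Dk 3 G (basept z w)
        + msem [shiftm i (1,0,0,0)] w * Dk 4 G (basept z w))) (at 0)"
proof -
  define dv where "dv = (fst (ev i), fst (snd (ev i)), snd (snd (ev i)), w 0 (addi mi0 i), w 1 (addi mi0 i))"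
  have "((\<lambda>s. G (basept z w + s *\<^sub>R dv)) has_real_derivative frechet_derivative G (at (basept z w)) dv) (at 0)"
    using line_deriv[OF G, of "basept z w" dv 0] by simp
  moreover have "frechet_derivative G (at (basept z w)) dv =
     Dk i G (basept z w) + msem [shiftm i (0,0,0,0)] w * Dk 3 G (basept z w)
        + msem [shiftm i (1,0,0,0)] w * Dk 4 G (basept z w)"
  proof -
    have "i = 0 \<or> i = 1 \<or> i = 2" using i by auto
    then show ?thesis unfolding dv_def using w_addi_mi0[OF i, of w 0] w_addi_mi0[OF i, of w 1]
      by (auto simp: fd_expand[OF G] ev_def)
  qed
  ultimately show ?thesis unfolding basept_path[OF i] dv_def[symmetric] by simp
qed

lemma evalT_Nil[simp]: "evalT B [] z w = 0" by (simp add: evalT_def)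
lemma evalT_Cons: "evalT B (t # P) z w = tsem B t z w + evalT B P z w" by (simp add: evalT_def)
lemma evalT_append: "evalT B (P @ Q) z w = evalT B P z w + evalT B Q z w" by (simp add: evalT_def)
lemma evalT_map_mono: "evalT B (map (\<lambda>m'. (r,(k,ds),m')) L) z w = r * dsem ds (B k) (basept z w) * sum_list (map (\<lambda>m'. msem m' w) L)"
  by (induction L) (auto simp: evalT_def tsem_def algebra_simps)

lemma tsem_path:
  assumes i: "i < 3" and B: "smooth (B (fst (fst (snd t))))"
  shows "((\<lambda>s. tsem B t (z + s *\<^sub>R ev i) (\<lambda>al J. w al J + s * w al (addi J i))) has_real_derivative
     evalT B (DT i t) z w) (at 0)"
proof -
  obtain r k ds m where t: "t = (r,(k,ds),m)" by (cases t) auto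
  have Bk: "smooth (B k)" using B t by simp
  define G where "G = dsem ds (B k)"
  have G: "smooth G" unfolding G_def by (rule smooth_dsem[OF Bk])
  have d: "((\<lambda>s. r * G (basept (z + s *\<^sub>R ev i) (\<lambda>al J. w al J + s * w al (addi J i)))
      * msem m (\<lambda>al J. w al J + s * w al (addi J i))) has_real_derivative
      r * (Dk i G (basept z w) + msem [shiftm i (0,0,0,0)] w * Dk 3 G (basept z w)
        + msem [shiftm i (1,0,0,0)] w * Dk 4 G (basept z w)) * msem m w
      + r * G (basept z w) * sum_list (map (\<lambda>m'. msem m' w) (DM i m))) (at 0)"
    using DERIV_mult[OF DERIV_cmult[OF csem_path[OF i G, of z w], where c=r] msem_path[OF i, of m w]]
    by (simp add: algebra_simps)
  have e: "evalT B (DT i t) z w = r * (Dk i G (basept z w) + msem [shiftm i (0,0,0,0)] w * Dk 3 G (basept z w)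
        + msem [shiftm i (1,0,0,0)] w * Dk 4 G (basept z w)) * msem m w
      + r * G (basept z w) * sum_list (map (\<lambda>m'. msem m' w) (DM i m))"
  proof -
    have m1: "msem (shiftm i (al,0,0,0) # m) w = msem [shiftm i (al,0,0,0)] w * msem m w" for al
      by (cases "shiftm i (al,0,0,0)") auto
    show ?thesis
      unfolding t G_def DT.simps evalT_append evalT_map_mono
      by (simp add: evalT_Cons tsem_def Dk_dsem_insort[OF Bk, symmetric] m1 algebra_simps)
  qed
  show ?thesis unfolding e using d unfolding t tsem_def G_def by simp
qed

definition smoothB :: "(nat \<Rightarrow> R5 \<Rightarrow> real) \<Rightarrow> bool" where
  "smoothB B = (\<forall>k. smooth (B k))"

lemma evalT_path:
  assumes i: "i < 3" and B: "smoothB B"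
  shows "((\<lambda>s. evalT B P (z + s *\<^sub>R ev i) (\<lambda>al J. w al J + s * w al (addi J i))) has_real_derivative
     evalT B (DP i P) z w) (at 0)"
proof (induction P)
  case Nil then show ?case by (simp add: evalT_def DP_def)
next
  case (Cons t P)
  have "((\<lambda>s. tsem B t (z + s *\<^sub>R ev i) (\<lambda>al J. w al J + s * w al (addi J i))
         + evalT B P (z + s *\<^sub>R ev i) (\<lambda>al J. w al J + s * w al (addi J i))) has_real_derivative
     evalT B (DT i t) z w + evalT B (DP i P) z w) (at 0)"
    using B unfolding smoothB_def by (intro DERIV_add tsem_path[OF i] Cons.IH) auto
  then show ?case by (simp add: evalT_def DP_def)
qed

lemma totD_evalT:
  assumes i: "i < 3" and B: "smoothB B"
  shows "totD i (evalT B P) = evalT B (DP i P)"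
  unfolding totD_def using DERIV_imp_deriv[OF evalT_path[OF i B]] by (intro ext) simp

lemma totD_pow_evalT:
  assumes i: "i < 3" and B: "smoothB B"
  shows "(totD i ^^ n) (evalT B P) = evalT B ((DP i ^^ n) P)"
  by (induction n) (simp_all add: totD_evalT[OF i B])

lemma totDJ_evalT:
  assumes B: "smoothB B"
  shows "totDJ (mi a b c) (evalT B P) = evalT B ((DP 0 ^^ a) ((DP 1 ^^ b) ((DP 2 ^^ c) P)))"
  unfolding totDJ_def mi_app by (simp add: totD_pow_evalT[OF _ B])

definition BB :: "(nat \<Rightarrow> R5 \<Rightarrow> real) \<Rightarrow> (nat \<Rightarrow> R5 \<Rightarrow> real) \<Rightarrow> nat \<Rightarrow> R5 \<Rightarrow> real" where
  "BB xi phi k = (if k < 3 then xi k else phi (k - 3))"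

definition charP0 :: "trm list" where
  "charP0 = [(1,(3,[]),[]), (-1,(0,[]),[(0,1,0,0)]), (-1,(1,[]),[(0,0,1,0)]), (-1,(2,[]),[(0,0,0,1)])]"

lemma sum3: "(\<Sum>i<3. f i) = f 0 + f 1 + (f (2::nat) :: real)"
  by (simp add: numeral_3_eq_3 lessThan_Suc numeral_2_eq_2)

lemma charQ_eval: "charQ xi phi 0 = evalT (BB xi phi) charP0"
  by (intro ext) (simp add: charQ_def charP0_def evalT_def tsem_def BB_def sum3 mi0_def addi_mi algebra_simps)

definition PC :: "nat \<Rightarrow> nat \<Rightarrow> nat \<Rightarrow> trm list" where
  "PC a b c = (DP 0 ^^ a) ((DP 1 ^^ b) ((DP 2 ^^ c) charP0)) @
     [(1,(0,[]),[(0,a+1,b,c)]), (1,(1,[]),[(0,a,b+1,c)]), (1,(2,[]),[(0,a,b,c+1)])]"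

lemma prol_coeff_eval:
  assumes "smoothB (BB xi phi)"
  shows "prol_coeff xi phi 0 (mi a b c) z w = evalT (BB xi phi) (PC a b c) z w"
  unfolding prol_coeff_def charQ_eval totDJ_evalT[OF assms] PC_def evalT_append
  by (simp add: evalT_Cons tsem_def BB_def sum3 addi_mi)

lemma prol_coeff_1:
  "prol_coeff xi phi 1 mi0 z w = phi 1 (basept z w)"
  by (simp add: prol_coeff_def totDJ_def mi0_def mi_app charQ_def)

lemma prol_coeff_1': "prol_coeff xi phi (Suc 0) (mi 0 0 0) z w = phi (Suc 0) (basept z w)"
  using prol_coeff_1[of xi phi z w] by (simp add: mi0_def)

lemma mi_order_mi: "mi_order (mi a b c) = a + b + c"
  by (simp add: mi_order_def mi_app)

definition EE :: "real \<Rightarrow> real \<Rightarrow> (nat \<Rightarrow> R5 \<Rightarrow> real) \<Rightarrow> jfun" where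
  "EE \<epsilon> \<gamma> B z w = evalT B (PC 0 0 2) z w - \<epsilon> * (evalT B (PC 2 0 1) z w + evalT B (PC 0 2 1) z w)
     - \<gamma> * (evalT B (PC 2 0 0) z w + evalT B (PC 0 2 0) z w) - B 4 (basept z w)"

lemma prolong_eval:
  assumes "smoothB (BB xi phi)"
  shows "prolong_apply 3 xi phi (eqn \<epsilon> \<gamma>) z w = EE \<epsilon> \<gamma> (BB xi phi) z w"
proof -
  define V where "V = (\<lambda>\<alpha> J. (if \<alpha> < 2 \<and> mi_order J \<le> 3 then prol_coeff xi phi \<alpha> J z w else 0))"
  have "((\<lambda>s. eqn \<epsilon> \<gamma> (z + s *\<^sub>R xivec xi z w) (\<lambda>\<alpha> J. w \<alpha> J + s * V \<alpha> J)) has_real_derivative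
     V 0 (mi 0 0 2) - \<epsilon> * (V 0 (mi 2 0 1) + V 0 (mi 0 2 1)) - \<gamma> * (V 0 (mi 2 0 0) + V 0 (mi 0 2 0)) - V 1 mi0) (at 0)"
    unfolding eqn_def by (auto intro!: derivative_eq_intros)
  then have "prolong_apply 3 xi phi (eqn \<epsilon> \<gamma>) z w =
     V 0 (mi 0 0 2) - \<epsilon> * (V 0 (mi 2 0 1) + V 0 (mi 0 2 1)) - \<gamma> * (V 0 (mi 2 0 0) + V 0 (mi 0 2 0)) - V 1 mi0"
    unfolding prolong_apply_def V_def by (rule DERIV_imp_deriv)
  also have "\<dots> = EE \<epsilon> \<gamma> (BB xi phi) z w"
    unfolding V_def EE_def by (simp add: mi_order_mi prol_coeff_eval[OF assms] prol_coeff_1' mi0_def mi_order_def mi_app BB_def)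
  finally show ?thesis .
qed

lemma funpow_small: "(g ^^ 2) = g \<circ> g" "(g ^^ 1) = g"
  by (simp_all add: numeral_2_eq_2)

definition jt :: "(nat \<Rightarrow> nat \<Rightarrow> nat \<Rightarrow> nat \<Rightarrow> real) \<Rightarrow> jet" where
  "jt tab = (\<lambda>\<alpha> J. tab \<alpha> (J 0) (J 1) (J 2))"
lemma jt_mi: "jt tab \<alpha> (mi a b c) = tab \<alpha> a b c"
  by (simp add: jt_def mi_app)
lemma basept_jt: "basept (x,y,t) (jt tab) = (x,y,t,tab 0 0 0 0, tab 1 0 0 0)"
  by (simp add: basept_def jt_def mi0_def mi_app)
lemma eqn_jt: "eqn \<epsilon> \<gamma> z (jt tab) = tab 0 0 0 2 - \<epsilon> * (tab 0 2 0 1 + tab 0 0 2 1) - \<gamma> * (tab 0 2 0 0 + tab 0 0 2 0) - tab 1 0 0 0"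
  by (simp add: eqn_def jt_mi mi0_def)

declare One_nat_def[simp del]
lemmas evsimps = EE_def PC_def charP0_def DP_def shiftm_def funpow_small jt_mi basept_jt evalT_def tsem_def

definition Hyp :: "real \<Rightarrow> real \<Rightarrow> (nat \<Rightarrow> R5 \<Rightarrow> real) \<Rightarrow> bool" where
  "Hyp \<epsilon> \<gamma> B = (\<forall>z w. eqn \<epsilon> \<gamma> z w = 0 \<longrightarrow> EE \<epsilon> \<gamma> B z w = 0)"

lemma ext2: "(a1::real) = b1 \<Longrightarrow> a0 = b0 \<Longrightarrow> g = (a1 - b1) - (a0 - b0) \<Longrightarrow> g = 0"
  by simp

lemma JA:
  assumes H: "Hyp \<epsilon> \<gamma> B"
  shows "Dk 4 (B 3) (x,y,t,u,f) - ra * Dk 4 (B 0) (x,y,t,u,f) - rb * Dk 4 (B 1) (x,y,t,u,f) - rc * Dk 4 (B 2) (x,y,t,u,f) = 0"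
proof -
  have h: "EE \<epsilon> \<gamma> B (x,y,t) (jt (\<lambda>\<alpha> a b c. if \<alpha> = 0 then (if a = 0 then (if b = 0 then (if c = 0 then (u) else if c = 1 then (rc) else if c = 2 then (f) else 0) else if b = 1 then (if c = 0 then (rb) else 0) else 0) else if a = 1 then (if b = 0 then (if c = 0 then (ra) else 0) else 0) else 0) else if \<alpha> = 1 then (if a = 0 then (if b = 0 then (if c = 0 then (f) else if c = 2 then (s) else 0) else 0) else 0) else 0)) = 0" for ra rb rc s
    using H unfolding Hyp_def by (simp add: eqn_jt)
  note [simp] = evsimps
  note q = h[simplified]
  show ?thesis by (rule ext2[OF q[where ra=ra and rb=rb and rc=rc and s=1, simplified] q[where ra=ra and rb=rb and rc=rc and s=0, simplified]]) (simp add: algebra_simps)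
qed

lemma JB:
  assumes H: "Hyp \<epsilon> \<gamma> B" and e: "\<epsilon> \<noteq> 0"
  shows "Dk 2 (B 0) (x,y,t,u,f) + r * Dk 3 (B 0) (x,y,t,u,f) = 0"
    "Dk 2 (B 1) (x,y,t,u,f) + r * Dk 3 (B 1) (x,y,t,u,f) = 0"
    "Dk 0 (B 2) (x,y,t,u,f) + q * Dk 3 (B 2) (x,y,t,u,f) = 0"
    "Dk 1 (B 2) (x,y,t,u,f) = 0"
    "Dk 1 (B 0) (x,y,t,u,f) + Dk 0 (B 1) (x,y,t,u,f) + q * Dk 3 (B 1) (x,y,t,u,f) = 0"
    "2 * Dk 0 (B 0) (x,y,t,u,f) + \<epsilon> * (Dk 0 (Dk 0 (B 2)) (x,y,t,u,f) + Dk 1 (Dk 1 (B 2)) (x,y,t,u,f)) - Dk 2 (B 2) (x,y,t,u,f) = 0"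
    "2 * Dk 1 (B 1) (x,y,t,u,f) + \<epsilon> * (Dk 0 (Dk 0 (B 2)) (x,y,t,u,f) + Dk 1 (Dk 1 (B 2)) (x,y,t,u,f)) - Dk 2 (B 2) (x,y,t,u,f) = 0"
proof -
  have h: "EE \<epsilon> \<gamma> B (x,y,t) (jt (\<lambda>\<alpha> a b c. if \<alpha> = 0 then (if a = 0 then (if b = 0 then (if c = 0 then (u) else if c = 1 then (r) else if c = 2 then (f + \<epsilon> * (sf + sg)) else 0) else if b = 1 then (if c = 2 then (sd) else 0) else if b = 2 then (if c = 1 then (sg) else 0) else if b = 3 then (if c = 0 then (sb) else 0) else 0) else if a = 1 then (if b = 0 then (if c = 0 then (q) else if c = 2 then (sc) else 0) else if b = 1 then (if c = 1 then (se) else 0) else 0) else if a = 2 then (if b = 0 then (if c = 1 then (sf) else 0) else 0) else if a = 3 then (if b = 0 then (if c = 0 then (sa) else 0) else 0) else 0) else if \<alpha> = 1 then (if a = 0 then (if b = 0 then (if c = 0 then (f) else 0) else 0) else 0) else 0)) = 0" for r q sa sb sc sd se sf sg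
    using H unfolding Hyp_def by (simp add: eqn_jt)
  note [simp] = evsimps
  note q = h[simplified]
  have "\<epsilon> * (Dk 2 (B 0) (x,y,t,u,f) + r * Dk 3 (B 0) (x,y,t,u,f)) = 0"
    by (rule ext2[OF q[where r=r and q=q and sa=1 and sb=0 and sc=0 and sd=0 and se=0 and sf=0 and sg=0, simplified] q[where r=r and q=q and sa=0 and sb=0 and sc=0 and sd=0 and se=0 and sf=0 and sg=0, simplified]]) (simp add: algebra_simps)
  then show "Dk 2 (B 0) (x,y,t,u,f) + r * Dk 3 (B 0) (x,y,t,u,f) = 0" using e by simp
  have "\<epsilon> * (Dk 2 (B 1) (x,y,t,u,f) + r * Dk 3 (B 1) (x,y,t,u,f)) = 0"
    by (rule ext2[OF q[where r=r and q=q and sa=0 and sb=1 and sc=0 and sd=0 and se=0 and sf=0 and sg=0, simplified] q[where r=r and q=q and sa=0 and sb=0 and sc=0 and sd=0 and se=0 and sf=0 and sg=0, simplified]]) (simp add: algebra_simps)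
  then show "Dk 2 (B 1) (x,y,t,u,f) + r * Dk 3 (B 1) (x,y,t,u,f) = 0" using e by simp
  have "2 * \<epsilon> * (Dk 0 (B 2) (x,y,t,u,f) + q * Dk 3 (B 2) (x,y,t,u,f)) = 0"
    by (rule ext2[OF q[where r=r and q=q and sa=0 and sb=0 and sc=1 and sd=0 and se=0 and sf=0 and sg=0, simplified] q[where r=r and q=q and sa=0 and sb=0 and sc=0 and sd=0 and se=0 and sf=0 and sg=0, simplified]]) (simp add: algebra_simps)
  then show "Dk 0 (B 2) (x,y,t,u,f) + q * Dk 3 (B 2) (x,y,t,u,f) = 0" using e by simp
  have "2 * \<epsilon> * (Dk 1 (B 2) (x,y,t,u,f)) = 0"
    by (rule ext2[OF q[where r=r and q=0 and sa=0 and sb=0 and sc=0 and sd=1 and se=0 and sf=0 and sg=0, simplified] q[where r=r and q=0 and sa=0 and sb=0 and sc=0 and sd=0 and se=0 and sf=0 and sg=0, simplified]]) (simp add: algebra_simps)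
  then show "Dk 1 (B 2) (x,y,t,u,f) = 0" using e by simp
  have "2 * \<epsilon> * (Dk 1 (B 0) (x,y,t,u,f) + Dk 0 (B 1) (x,y,t,u,f) + q * Dk 3 (B 1) (x,y,t,u,f)) = 0"
    by (rule ext2[OF q[where r=r and q=q and sa=0 and sb=0 and sc=0 and sd=0 and se=1 and sf=0 and sg=0, simplified] q[where r=r and q=q and sa=0 and sb=0 and sc=0 and sd=0 and se=0 and sf=0 and sg=0, simplified]]) (simp add: algebra_simps)
  then show "Dk 1 (B 0) (x,y,t,u,f) + Dk 0 (B 1) (x,y,t,u,f) + q * Dk 3 (B 1) (x,y,t,u,f) = 0" using e by simp
  have "\<epsilon> * (2 * Dk 0 (B 0) (x,y,t,u,f) + \<epsilon> * (Dk 0 (Dk 0 (B 2)) (x,y,t,u,f) + Dk 1 (Dk 1 (B 2)) (x,y,t,u,f)) - Dk 2 (B 2) (x,y,t,u,f)) = 0"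
    by (rule ext2[OF q[where r=0 and q=0 and sa=0 and sb=0 and sc=0 and sd=0 and se=0 and sf=1 and sg=0, simplified] q[where r=0 and q=0 and sa=0 and sb=0 and sc=0 and sd=0 and se=0 and sf=0 and sg=0, simplified]]) (simp add: algebra_simps)
  then show "2 * Dk 0 (B 0) (x,y,t,u,f) + \<epsilon> * (Dk 0 (Dk 0 (B 2)) (x,y,t,u,f) + Dk 1 (Dk 1 (B 2)) (x,y,t,u,f)) - Dk 2 (B 2) (x,y,t,u,f) = 0" using e by simp
  have "\<epsilon> * (2 * Dk 1 (B 1) (x,y,t,u,f) + \<epsilon> * (Dk 0 (Dk 0 (B 2)) (x,y,t,u,f) + Dk 1 (Dk 1 (B 2)) (x,y,t,u,f)) - Dk 2 (B 2) (x,y,t,u,f)) = 0"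
    by (rule ext2[OF q[where r=0 and q=0 and sa=0 and sb=0 and sc=0 and sd=0 and se=0 and sf=0 and sg=1, simplified] q[where r=0 and q=0 and sa=0 and sb=0 and sc=0 and sd=0 and se=0 and sf=0 and sg=0, simplified]]) (simp add: algebra_simps)
  then show "2 * Dk 1 (B 1) (x,y,t,u,f) + \<epsilon> * (Dk 0 (Dk 0 (B 2)) (x,y,t,u,f) + Dk 1 (Dk 1 (B 2)) (x,y,t,u,f)) - Dk 2 (B 2) (x,y,t,u,f) = 0" using e by simp
qed

definition aff5 :: "real \<Rightarrow> real \<Rightarrow> real \<Rightarrow> real \<Rightarrow> real \<Rightarrow> real \<Rightarrow> R5 \<Rightarrow> real" where
  "aff5 a0 a1 a2 a3 a4 b = (\<lambda>p. a0 * fst p + a1 * fst (snd p) + a2 * fst (snd (snd p))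
      + a3 * fst (snd (snd (snd p))) + a4 * snd (snd (snd (snd p))) + b)"

lemma aff5_apply: "aff5 a0 a1 a2 a3 a4 b (x,y,t,u,f) = a0 * x + a1 * y + a2 * t + a3 * u + a4 * f + b"
  by (simp add: aff5_def)

lemma aff5_has_derivative:
  "(aff5 a0 a1 a2 a3 a4 b has_derivative (\<lambda>v. aff5 a0 a1 a2 a3 a4 0 v)) (at p)"
  unfolding aff5_def by (auto intro!: derivative_eq_intros)

lemma Dk_aff5: "Dk k (aff5 a0 a1 a2 a3 a4 b) =
   (\<lambda>_. if k = 0 then a0 else if k = 1 then a1 else if k = 2 then a2 else if k = 3 then a3 else a4)"
  unfolding Dk_def using frechet_derivative_at[OF aff5_has_derivative]
  by (intro ext) (auto simp: e5_def aff5_def)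

lemma Dk_const: "Dk k (\<lambda>_. c) = (\<lambda>_. 0)"
  unfolding Dk_def by simp

lemma smooth_has_derivative_Dk:
  assumes "smooth g"
  shows "(g has_derivative (\<lambda>v. fst v * Dk 0 g p + fst (snd v) * Dk 1 g p + fst (snd (snd v)) * Dk 2 g p
      + fst (snd (snd (snd v))) * Dk 3 g p + snd (snd (snd (snd v))) * Dk 4 g p)) (at p)"
proof -
  have "frechet_derivative g (at p) = (\<lambda>v. fst v * Dk 0 g p + fst (snd v) * Dk 1 g p + fst (snd (snd v)) * Dk 2 g p
      + fst (snd (snd (snd v))) * Dk 3 g p + snd (snd (snd (snd v))) * Dk 4 g p)"
    by (rule ext) (auto simp: fd_expand[OF assms])
  then show ?thesis using smooth_has_fd[OF assms, of p] by simp
qed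

lemma affine_from_Dk:
  assumes g: "smooth g" and d0: "\<And>p. Dk 0 g p = a0" and d1: "\<And>p. Dk 1 g p = a1"
    and d2: "\<And>p. Dk 2 g p = a2" and d3: "\<And>p. Dk 3 g p = a3" and d4: "\<And>p. Dk 4 g p = a4"
  shows "g = aff5 a0 a1 a2 a3 a4 (g (0,0,0,0,0))"
proof -
  have "((\<lambda>p. g p - aff5 a0 a1 a2 a3 a4 0 p) has_derivative (\<lambda>h. 0)) (at p within UNIV)" for p
  proof -
    have "((\<lambda>p. g p - aff5 a0 a1 a2 a3 a4 0 p) has_derivative
        (\<lambda>v. (fst v * Dk 0 g p + fst (snd v) * Dk 1 g p + fst (snd (snd v)) * Dk 2 g p
      + fst (snd (snd (snd v))) * Dk 3 g p + snd (snd (snd (snd v))) * Dk 4 g p) - aff5 a0 a1 a2 a3 a4 0 v)) (at p)"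
      by (intro has_derivative_diff smooth_has_derivative_Dk[OF g] aff5_has_derivative)
    moreover have "(\<lambda>v. (fst v * Dk 0 g p + fst (snd v) * Dk 1 g p + fst (snd (snd v)) * Dk 2 g p
      + fst (snd (snd (snd v))) * Dk 3 g p + snd (snd (snd (snd v))) * Dk 4 g p) - aff5 a0 a1 a2 a3 a4 0 v) = (\<lambda>h. 0)"
      by (intro ext) (simp add: d0 d1 d2 d3 d4 aff5_def algebra_simps)
    ultimately show ?thesis by simp
  qed
  then obtain c where c: "\<And>p. g p - aff5 a0 a1 a2 a3 a4 0 p = c"
    using has_derivative_zero_constant[of UNIV "\<lambda>p. g p - aff5 a0 a1 a2 a3 a4 0 p"] by auto
  have c0: "c = g (0,0,0,0,0)" using c[of "(0,0,0,0,0)"] by (simp add: aff5_def)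
  show ?thesis
  proof
    fix p show "g p = aff5 a0 a1 a2 a3 a4 (g (0,0,0,0,0)) p"
      using c[of p] c0 by (simp add: aff5_def)
  qed
qed

lemma Dk_zero_fun: "(\<And>p. Dk k g p = 0) \<Longrightarrow> Dk k g = (\<lambda>_. 0)"
  by (rule ext) simp

lemma Dk_cmult: "smooth g \<Longrightarrow> Dk k (\<lambda>p. c * g p) = (\<lambda>p. c * Dk k g p)"
proof -
  assume g: "smooth g"
  show ?thesis
  proof
    fix p
    have "((\<lambda>p. c * g p) has_derivative (\<lambda>v. c * frechet_derivative g (at p) v)) (at p)"
      by (intro has_derivative_mult_right smooth_has_fd[OF g])
    then show "Dk k (\<lambda>p. c * g p) p = c * Dk k g p"
      unfolding Dk_def using frechet_derivative_at by metis
  qed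
qed

lemma lin_line:
  assumes g: "smooth g" and d: "\<And>p. Dk k g p = a"
  shows "g (p + s *\<^sub>R e5 k) = g p + a * s"
proof -
  have "\<forall>s. DERIV (\<lambda>s. g (p + s *\<^sub>R e5 k) - a * s) s :> 0"
  proof
    fix s show "DERIV (\<lambda>s. g (p + s *\<^sub>R e5 k) - a * s) s :> 0"
  proof -
    have "DERIV (\<lambda>s. g (p + s *\<^sub>R e5 k) - a * s) s :> frechet_derivative g (at (p + s *\<^sub>R e5 k)) (e5 k) - a * 1"
      by (intro DERIV_diff line_deriv[OF g] DERIV_cmult DERIV_ident)
    then show "DERIV (\<lambda>s. g (p + s *\<^sub>R e5 k) - a * s) s :> 0" using d unfolding Dk_def by simp
  qed
  qed
  then have "g (p + s *\<^sub>R e5 k) - a * s = g (p + 0 *\<^sub>R e5 k) - a * 0"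
    by (rule DERIV_isconst_all)
  then show ?thesis by simp
qed

lemma allp: "(\<And>x y t u f. P (x,y,t,u,f)) \<Longrightarrow> P p"
  by (cases p) auto

lemma smoothB_D: "smoothB B \<Longrightarrow> smooth (B k)"
  by (simp add: smoothB_def)

lemma phase2:
  assumes B: "smoothB B" and H: "Hyp \<epsilon> \<gamma> B" and e: "\<epsilon> \<noteq> 0"
  shows "\<exists>K c1. B 0 = aff5 K c1 0 0 0 (B 0 (0,0,0,0,0)) \<and> B 1 = aff5 (-c1) K 0 0 0 (B 1 (0,0,0,0,0))
      \<and> B 2 = aff5 0 0 (2*K) 0 0 (B 2 (0,0,0,0,0)) \<and> Dk 4 (B 3) = (\<lambda>_. 0)"
proof -
  note sm = smoothB_D[OF B]
  have A0: "Dk 4 (B 3) p = 0" for p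
    by (cases p) (simp add: JA[OF H, where ra=0 and rb=0 and rc=0, simplified])
  have A: "Dk 4 (B k) p = 0" if "k < 3" for k p
  proof -
    have "k = 0 \<or> k = 1 \<or> k = 2" using that by auto
    then show ?thesis
      using JA[OF H, where ra=1 and rb=0 and rc=0] JA[OF H, where ra=0 and rb=1 and rc=0]
        JA[OF H, where ra=0 and rb=0 and rc=1] A0 by (cases p) auto
  qed
  have a2: "Dk 2 (B 0) p = 0" for p by (cases p) (simp add: JB(1)[OF H e, where r=0, simplified])
  have a3: "Dk 3 (B 0) p = 0" for p by (cases p) (simp add: JB(1)[OF H e, where r=1, unfolded a2, simplified])
  have b2: "Dk 2 (B 1) p = 0" for p by (cases p) (simp add: JB(2)[OF H e, where r=0, simplified])
  have b3: "Dk 3 (B 1) p = 0" for p by (cases p) (simp add: JB(2)[OF H e, where r=1, unfolded b2, simplified])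
  have c0: "Dk 0 (B 2) p = 0" for p by (cases p) (simp add: JB(3)[OF H e, where q=0, simplified])
  have c3: "Dk 3 (B 2) p = 0" for p by (cases p) (simp add: JB(3)[OF H e, where q=1, unfolded c0, simplified])
  have c1: "Dk 1 (B 2) p = 0" for p by (cases p) (simp add: JB(4)[OF H e, simplified])
  have ab: "Dk 1 (B 0) p + Dk 0 (B 1) p = 0" for p by (cases p) (simp add: JB(5)[OF H e, where q=0, simplified])
  have C0: "Dk 0 (B 2) = (\<lambda>_. 0)" "Dk 1 (B 2) = (\<lambda>_. 0)" "Dk 3 (B 2) = (\<lambda>_. 0)" "Dk 4 (B 2) = (\<lambda>_. 0)"
    using c0 c1 c3 A[of 2] by (auto intro: Dk_zero_fun)
  have A2: "Dk 2 (B 0) = (\<lambda>_. 0)" "Dk 3 (B 0) = (\<lambda>_. 0)" "Dk 4 (B 0) = (\<lambda>_. 0)"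
    "Dk 2 (B 1) = (\<lambda>_. 0)" "Dk 3 (B 1) = (\<lambda>_. 0)" "Dk 4 (B 1) = (\<lambda>_. 0)"
    using a2 a3 b2 b3 A[of 0] A[of 1] by (auto intro: Dk_zero_fun)
  have e6: "2 * Dk 0 (B 0) p = Dk 2 (B 2) p" for p
    proof (cases p)
    case (fields x y t u f) then show ?thesis using JB(6)[OF H e, where x=x and y=y and t=t and u=u and f=f] by (simp add: C0 Dk_const)
  qed
  have e7: "2 * Dk 1 (B 1) p = Dk 2 (B 2) p" for p
    proof (cases p)
    case (fields x y t u f) then show ?thesis using JB(7)[OF H e, where x=x and y=y and t=t and u=u and f=f] by (simp add: C0 Dk_const)
  qed
  have F0: "Dk 0 (B 0) = (\<lambda>p. (1/2) * Dk 2 (B 2) p)"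
    using e6 by (intro ext) (simp add: field_simps)
  have D2c: "Dk j (Dk 2 (B 2)) = (\<lambda>_. 0)" if "j = 0 \<or> j = 1 \<or> j = 3 \<or> j = 4" for j
  proof -
    have "Dk j (Dk 2 (B 2)) = Dk 2 (Dk j (B 2))" by (rule Dk_swap[OF sm])
    then show ?thesis using that by (auto simp: C0 Dk_const)
  qed
  have sD2c: "smooth (Dk 2 (B 2))" by (rule smooth_Dk[OF sm])
  have "Dk 0 (B 0) = aff5 0 0 0 0 0 (Dk 0 (B 0) (0,0,0,0,0))"
  proof (rule affine_from_Dk[OF smooth_Dk[OF sm]])
    fix p
    show "Dk 0 (Dk 0 (B 0)) p = 0" unfolding F0 Dk_cmult[OF sD2c] using D2c[of 0] by simp
    show "Dk 1 (Dk 0 (B 0)) p = 0" unfolding F0 Dk_cmult[OF sD2c] using D2c[of 1] by simp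
    show "Dk 2 (Dk 0 (B 0)) p = 0" using Dk_swap[OF sm, of 2 0 0] by (simp add: A2 Dk_const)
    show "Dk 3 (Dk 0 (B 0)) p = 0" using Dk_swap[OF sm, of 3 0 0] by (simp add: A2 Dk_const)
    show "Dk 4 (Dk 0 (B 0)) p = 0" using Dk_swap[OF sm, of 4 0 0] by (simp add: A2 Dk_const)
  qed
  then obtain K where K: "Dk 0 (B 0) = (\<lambda>_. K)" by (auto simp: aff5_def)
  have K2: "Dk 2 (B 2) p = 2 * K" for p using e6[of p] K by simp
  have K1: "Dk 1 (B 1) = (\<lambda>_. K)" using e7 K2 by (intro ext) simp
  have G0: "Dk 1 (B 0) = (\<lambda>p. (-1) * Dk 0 (B 1) p)"
    using ab by (intro ext) (simp add: algebra_simps eq_neg_iff_add_eq_0)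
  have "Dk 1 (B 0) = aff5 0 0 0 0 0 (Dk 1 (B 0) (0,0,0,0,0))"
  proof (rule affine_from_Dk[OF smooth_Dk[OF sm]])
    fix p
    show "Dk 0 (Dk 1 (B 0)) p = 0" using Dk_swap[OF sm, of 0 1 0] by (simp add: K Dk_const)
    have "Dk 1 (Dk 0 (B 1)) = Dk 0 (Dk 1 (B 1))" by (rule Dk_swap[OF sm])
    then show "Dk 1 (Dk 1 (B 0)) p = 0" unfolding G0 Dk_cmult[OF smooth_Dk[OF sm]]
      by (simp add: K1 Dk_const)
    show "Dk 2 (Dk 1 (B 0)) p = 0" using Dk_swap[OF sm, of 2 1 0] by (simp add: A2 Dk_const)
    show "Dk 3 (Dk 1 (B 0)) p = 0" using Dk_swap[OF sm, of 3 1 0] by (simp add: A2 Dk_const)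
    show "Dk 4 (Dk 1 (B 0)) p = 0" using Dk_swap[OF sm, of 4 1 0] by (simp add: A2 Dk_const)
  qed
  then obtain c1 where c1: "Dk 1 (B 0) = (\<lambda>_. c1)" by (auto simp: aff5_def)
  have b0: "Dk 0 (B 1) p = - c1" for p using ab[of p] c1 by simp
  have "B 0 = aff5 K c1 0 0 0 (B 0 (0,0,0,0,0))"
    by (rule affine_from_Dk[OF sm]) (simp_all add: K c1 A2)
  moreover have "B 1 = aff5 (-c1) K 0 0 0 (B 1 (0,0,0,0,0))"
    by (rule affine_from_Dk[OF sm]) (simp_all add: K1 b0 A2)
  moreover have "B 2 = aff5 0 0 (2*K) 0 0 (B 2 (0,0,0,0,0))"
    by (rule affine_from_Dk[OF sm]) (simp_all add: K2 C0)
  moreover have "Dk 4 (B 3) = (\<lambda>_. 0)" using A0 by (intro Dk_zero_fun)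
  ultimately show ?thesis by blast
qed

lemma ext1: "(a1::real) = b1 \<Longrightarrow> g = a1 - b1 \<Longrightarrow> g = 0"
  by simp
lemma ext_odd: "(a1::real) = b1 \<Longrightarrow> am = bm \<Longrightarrow> 2 * g = (a1 - b1) - (am - bm) \<Longrightarrow> g = 0"
  by simp
lemma ext_even: "(a1::real) = b1 \<Longrightarrow> am = bm \<Longrightarrow> a0 = b0 \<Longrightarrow> 2 * g = (a1 - b1) + (am - bm) - 2 * (a0 - b0) \<Longrightarrow> g = 0"
  by simp

lemma JC:
  assumes H: "Hyp \<epsilon> \<gamma> B"
    and hB0: "B 0 = aff5 K c1 0 0 0 a0" and hB1: "B 1 = aff5 (-c1) K 0 0 0 b0" and hB2: "B 2 = aff5 0 0 (2*K) 0 0 c0"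
  shows "-2 * \<epsilon> * Dk 0 (Dk 3 (B 3)) (x,y,t,u,f) = 0"
    "-2 * \<epsilon> * Dk 1 (Dk 3 (B 3)) (x,y,t,u,f) = 0"
    "-2 * K * \<gamma> - \<epsilon> * Dk 2 (Dk 3 (B 3)) (x,y,t,u,f) = 0"
proof -
  have h: "EE \<epsilon> \<gamma> B (x,y,t) (jt (\<lambda>\<alpha> a b c. if \<alpha> = 0 then (if a = 0 then (if b = 0 then (if c = 0 then (u) else if c = 2 then (f + \<gamma> * sc) else 0) else if b = 1 then (if c = 1 then (sb) else 0) else 0) else if a = 1 then (if b = 0 then (if c = 1 then (sa) else 0) else 0) else if a = 2 then (if b = 0 then (if c = 0 then (sc) else 0) else 0) else 0) else if \<alpha> = 1 then (if a = 0 then (if b = 0 then (if c = 0 then (f) else 0) else 0) else 0) else 0)) = 0" for sa sb sc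
    using H unfolding Hyp_def by (simp add: eqn_jt)
  note [simp] = evsimps hB0 hB1 hB2 Dk_aff5 Dk_const aff5_apply
  note q = h[simplified]
  show "-2 * \<epsilon> * Dk 0 (Dk 3 (B 3)) (x,y,t,u,f) = 0"
    by (rule ext2[OF q[where sa=1 and sb=0 and sc=0, simplified] q[where sa=0 and sb=0 and sc=0, simplified]]) (simp add: algebra_simps)
  show "-2 * \<epsilon> * Dk 1 (Dk 3 (B 3)) (x,y,t,u,f) = 0"
    by (rule ext2[OF q[where sa=0 and sb=1 and sc=0, simplified] q[where sa=0 and sb=0 and sc=0, simplified]]) (simp add: algebra_simps)
  show "-2 * K * \<gamma> - \<epsilon> * Dk 2 (Dk 3 (B 3)) (x,y,t,u,f) = 0"
    by (rule ext2[OF q[where sa=0 and sb=0 and sc=1, simplified] q[where sa=0 and sb=0 and sc=0, simplified]]) (simp add: algebra_simps)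
qed

lemma JD:
  assumes H: "Hyp \<epsilon> \<gamma> B"
    and hB0: "B 0 = aff5 K c1 0 0 0 a0" and hB1: "B 1 = aff5 (-c1) K 0 0 0 b0" and hB2: "B 2 = aff5 0 0 (2*K) 0 0 c0"
  shows "2 * Dk 2 (Dk 3 (B 3)) (x,y,t,u,f) - \<epsilon> * (Dk 0 (Dk 0 (Dk 3 (B 3))) (x,y,t,u,f) + Dk 1 (Dk 1 (Dk 3 (B 3))) (x,y,t,u,f)) = 0"
    "Dk 3 (Dk 3 (B 3)) (x,y,t,u,f) = 0"
    "Dk 2 (Dk 2 (B 3)) (x,y,t,u,f) + f * Dk 3 (B 3) (x,y,t,u,f) - 4 * K * f - \<epsilon> * (Dk 0 (Dk 0 (Dk 2 (B 3))) (x,y,t,u,f) + Dk 1 (Dk 1 (Dk 2 (B 3))) (x,y,t,u,f))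
      - \<gamma> * (Dk 0 (Dk 0 (B 3)) (x,y,t,u,f) + Dk 1 (Dk 1 (B 3)) (x,y,t,u,f)) - B 4 (x,y,t,u,f) = 0"
proof -
  have h: "EE \<epsilon> \<gamma> B (x,y,t) (jt (\<lambda>\<alpha> a b c. if \<alpha> = 0 then (if a = 0 then (if b = 0 then (if c = 0 then (u) else if c = 1 then (r) else if c = 2 then (f) else 0) else 0) else 0) else if \<alpha> = 1 then (if a = 0 then (if b = 0 then (if c = 0 then (f) else 0) else 0) else 0) else 0)) = 0" for r
    using H unfolding Hyp_def by (simp add: eqn_jt)
  note [simp] = evsimps hB0 hB1 hB2 Dk_aff5 Dk_const aff5_apply
  note q = h[simplified]
  show "2 * Dk 2 (Dk 3 (B 3)) (x,y,t,u,f) - \<epsilon> * (Dk 0 (Dk 0 (Dk 3 (B 3))) (x,y,t,u,f) + Dk 1 (Dk 1 (Dk 3 (B 3))) (x,y,t,u,f)) = 0"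
    by (rule ext_odd[OF q[where r=1, simplified] q[where r="-1", simplified]]) (simp add: algebra_simps)
  show "Dk 3 (Dk 3 (B 3)) (x,y,t,u,f) = 0"
    by (rule ext_even[OF q[where r=1, simplified] q[where r="-1", simplified] q[where r=0, simplified]]) (simp add: algebra_simps)
  show "Dk 2 (Dk 2 (B 3)) (x,y,t,u,f) + f * Dk 3 (B 3) (x,y,t,u,f) - 4 * K * f - \<epsilon> * (Dk 0 (Dk 0 (Dk 2 (B 3))) (x,y,t,u,f) + Dk 1 (Dk 1 (Dk 2 (B 3))) (x,y,t,u,f))
      - \<gamma> * (Dk 0 (Dk 0 (B 3)) (x,y,t,u,f) + Dk 1 (Dk 1 (B 3)) (x,y,t,u,f)) - B 4 (x,y,t,u,f) = 0"
    by (rule ext1[OF q[where r=0, simplified]]) (simp add: algebra_simps)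
qed

definition proj3 :: "R5 \<Rightarrow> R3" where
  "proj3 p = (fst p, fst (snd p), fst (snd (snd p)))"
definition emb :: "R3 \<Rightarrow> R5" where
  "emb z = (fst z, fst (snd z), snd (snd z), 0, 0)"
definition P3 :: "nat \<Rightarrow> (R3 \<Rightarrow> real) \<Rightarrow> R3 \<Rightarrow> real" where
  "P3 k G = (\<lambda>z. frechet_derivative G (at z) (ev k))"
definition LF :: "real \<Rightarrow> (R3 \<Rightarrow> real) \<Rightarrow> R5 \<Rightarrow> real" where
  "LF c G = (\<lambda>p. c * fst (snd (snd (snd p))) + G (proj3 p))"

lemma LF_apply: "LF c G (x,y,t,u,f) = c * u + G (x,y,t)"
  by (simp add: LF_def proj3_def)

lemma linear_proj3: "bounded_linear proj3"
proof -
  have "linear proj3" by (rule linearI) (auto simp: proj3_def)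
  then show ?thesis by (simp add: linear_conv_bounded_linear)
qed

lemma linear_emb: "bounded_linear emb"
proof -
  have "linear emb" by (rule linearI) (auto simp: emb_def)
  then show ?thesis by (simp add: linear_conv_bounded_linear)
qed

lemma Ck_comp:
  assumes "Ck n g" and L: "bounded_linear L"
  shows "Ck n (\<lambda>x. g (L x))"
  using assms(1)
proof (induction n arbitrary: g)
  case 0
  have "continuous_on UNIV L" using L by (simp add: linear_continuous_on)
  then show ?case using 0 by (auto intro: continuous_on_compose2[of UNIV g UNIV L])
next
  case (Suc n)
  have dg: "\<forall>p. g differentiable (at p)" and cg: "\<forall>v. Ck n (\<lambda>p. frechet_derivative g (at p) v)"
    using Suc.prems by auto
  have hd: "((\<lambda>x. g (L x)) has_derivative (\<lambda>v. frechet_derivative g (at (L p)) (L v))) (at p)" for p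
  proof -
    have "(g has_derivative frechet_derivative g (at (L p))) (at (L p))"
      using dg frechet_derivative_works by blast
    moreover have "(L has_derivative L) (at p)" using L by (rule bounded_linear_imp_has_derivative)
    ultimately show ?thesis using diff_chain_at[of L L p g] by (simp add: o_def)
  qed
  have "(\<lambda>x. g (L x)) differentiable (at p)" for p using hd differentiable_def by blast
  moreover have "Ck n (\<lambda>p. frechet_derivative (\<lambda>x. g (L x)) (at p) v)" for v
  proof -
    have "(\<lambda>p. frechet_derivative (\<lambda>x. g (L x)) (at p) v) = (\<lambda>p. frechet_derivative g (at (L p)) (L v))"
      using hd frechet_derivative_at by (metis (no_types, lifting))
    then show ?thesis using Suc.IH[OF cg[rule_format, of "L v"]] by simp
  qed
  ultimately show ?case by simp
qed

lemma smooth_comp: "smooth g \<Longrightarrow> bounded_linear L \<Longrightarrow> smooth (\<lambda>x. g (L x))"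
  unfolding smooth_def using Ck_comp by blast

lemma smooth_P3: "smooth G \<Longrightarrow> smooth (P3 k G)"
  unfolding P3_def by (rule smooth_fd)

lemma pd_P3: "smooth G \<Longrightarrow> pd k G = P3 k G"
proof
  fix z assume G: "smooth G"
  have "DERIV (\<lambda>s. G (z + s *\<^sub>R ev k)) 0 :> frechet_derivative G (at (z + 0 *\<^sub>R ev k)) (ev k)"
    by (rule line_deriv[OF G])
  then show "pd k G z = P3 k G z" unfolding pd_def P3_def using DERIV_imp_deriv by simp
qed

lemma P3_swap: "smooth G \<Longrightarrow> P3 i (P3 j G) = P3 j (P3 i G)"
  unfolding P3_def by (rule ext) (rule schwarz)

lemma Dk_LF:
  assumes G: "smooth G"
  shows "Dk k (LF c G) = (if k = 3 then (\<lambda>_. c) else if k < 3 then LF 0 (P3 k G) else (\<lambda>_. 0))"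
proof (rule ext)
  fix p
  have dG: "(G has_derivative frechet_derivative G (at (proj3 p))) (at (proj3 p))"
    using smooth_has_fd[OF G] .
  have d2: "((\<lambda>p. G (proj3 p)) has_derivative (\<lambda>v. frechet_derivative G (at (proj3 p)) (proj3 v))) (at p)"
    using diff_chain_at[OF bounded_linear_imp_has_derivative[OF linear_proj3] dG] by (simp add: o_def)
  have d1: "((\<lambda>p. c * fst (snd (snd (snd p)))) has_derivative (\<lambda>v. c * fst (snd (snd (snd v))))) (at p)"
    by (intro has_derivative_mult_right has_derivative_fst has_derivative_snd has_derivative_ident)
  have hL: "(LF c G has_derivative (\<lambda>v. c * fst (snd (snd (snd v))) + frechet_derivative G (at (proj3 p)) (proj3 v))) (at p)"
    unfolding LF_def by (rule has_derivative_add[OF d1 d2])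
  have e: "Dk k (LF c G) p = c * fst (snd (snd (snd (e5 k)))) + frechet_derivative G (at (proj3 p)) (proj3 (e5 k))"
    unfolding Dk_def frechet_derivative_at[OF hL, symmetric] by simp
  have lin: "linear (frechet_derivative G (at (proj3 p)))" by (rule smooth_linear_fd[OF G])
  have z: "frechet_derivative G (at (proj3 p)) (0,0,0) = 0" using linear_0[OF lin] by (simp add: zero_prod_def)
  have "k = 0 \<or> k = 1 \<or> k = 2 \<or> k = 3 \<or> k > 3" by auto
  then show "Dk k (LF c G) p = (if k = 3 then (\<lambda>_. c) else if k < 3 then LF 0 (P3 k G) else (\<lambda>_. 0)) p"
  proof (elim disjE)
    assume "k = 0" then show ?thesis unfolding e by (simp add: e5_def proj3_def LF_def P3_def ev_def)
  next
    assume "k = 1" then show ?thesis unfolding e by (simp add: e5_def proj3_def LF_def P3_def ev_def)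
  next
    assume "k = 2" then show ?thesis unfolding e by (simp add: e5_def proj3_def LF_def P3_def ev_def)
  next
    assume "k = 3" then show ?thesis unfolding e using z by (simp add: e5_def proj3_def)
  next
    assume "k > 3" then show ?thesis unfolding e using z by (simp add: e5_def proj3_def)
  qed
qed


lemma phase4:
  assumes g: "smooth g" and d4: "Dk 4 g = (\<lambda>_. 0)"
    and z0: "Dk 0 (Dk 3 g) = (\<lambda>_. 0)" and z1: "Dk 1 (Dk 3 g) = (\<lambda>_. 0)"
    and z2: "Dk 2 (Dk 3 g) = (\<lambda>_. 0)" and z3: "Dk 3 (Dk 3 g) = (\<lambda>_. 0)"
  shows "g = LF (Dk 3 g (0,0,0,0,0)) (\<lambda>z. g (emb z))"
proof -
  have z4: "Dk 4 (Dk 3 g) = (\<lambda>_. 0)" using Dk_swap[OF g, of 4 3] d4 by (simp add: Dk_const)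
  have c0: "Dk 3 g = aff5 0 0 0 0 0 (Dk 3 g (0,0,0,0,0))"
    by (rule affine_from_Dk[OF smooth_Dk[OF g]]) (simp_all add: z0 z1 z2 z3 z4)
  define c5 where "c5 = Dk 3 g (0,0,0,0,0)"
  have c: "Dk 3 g p = c5" for p using fun_cong[OF c0, of p] unfolding c5_def by (simp add: aff5_def)
  show ?thesis
  proof (rule ext)
    fix p :: R5
    obtain x y t u f where p: "p = (x,y,t,u,f)" by (cases p) auto
    have "g ((x,y,t,u,0) + f *\<^sub>R e5 4) = g (x,y,t,u,0) + 0 * f"
      by (rule lin_line[OF g]) (simp add: d4)
    moreover have "g ((x,y,t,0,0) + u *\<^sub>R e5 3) = g (x,y,t,0,0) + c5 * u"
      by (rule lin_line[OF g]) (simp add: c)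
    ultimately have "g (x,y,t,u,f) = g (x,y,t,0,0) + c5 * u" by (simp add: e5_def)
    then show "g p = LF (Dk 3 g (0,0,0,0,0)) (\<lambda>z. g (emb z)) p"
      unfolding p c5_def[symmetric] by (simp add: LF_apply emb_def)
  qed
qed

lemma only_if:
  assumes e: "\<epsilon> \<noteq> 0" and gm: "\<gamma> \<noteq> 0" and B: "smoothB B" and H: "Hyp \<epsilon> \<gamma> B"
  shows "\<exists>c1 c2 c3 c4 c5 :: real. \<exists>F :: R3 \<Rightarrow> real. smooth F \<and>
          (\<forall>x y t u f.
             B 0 (x,y,t,u,f) = c1 * y + c2 \<and>
             B 1 (x,y,t,u,f) = - c1 * x + c3 \<and>
             B 2 (x,y,t,u,f) = c4 \<and>
             B 3 (x,y,t,u,f) = c5 * u + F (x,y,t) \<and>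
             B 4 (x,y,t,u,f) = c5 * f + pd 2 (pd 2 F) (x,y,t)
                - \<epsilon> * (pd 2 (pd 0 (pd 0 F)) (x,y,t) + pd 2 (pd 1 (pd 1 F)) (x,y,t))
                - \<gamma> * (pd 0 (pd 0 F) (x,y,t) + pd 1 (pd 1 F) (x,y,t)))"
proof -
  note sm = smoothB_D[OF B]
  obtain K c1 where hB0: "B 0 = aff5 K c1 0 0 0 (B 0 (0,0,0,0,0))" and hB1: "B 1 = aff5 (-c1) K 0 0 0 (B 1 (0,0,0,0,0))"
    and hB2: "B 2 = aff5 0 0 (2*K) 0 0 (B 2 (0,0,0,0,0))" and d4: "Dk 4 (B 3) = (\<lambda>_. 0)"
    using phase2[OF B H e] by blast
  note JC' = JC[OF H hB0 hB1 hB2] and JD' = JD[OF H hB0 hB1 hB2]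
  have z0: "Dk 0 (Dk 3 (B 3)) = (\<lambda>_. 0)"
    by (rule ext, rule allp) (use JC'(1) e in simp)
  have z1: "Dk 1 (Dk 3 (B 3)) = (\<lambda>_. 0)"
    by (rule ext, rule allp) (use JC'(2) e in simp)
  have z2: "Dk 2 (Dk 3 (B 3)) = (\<lambda>_. 0)"
    by (rule ext, rule allp) (use JD'(1) in \<open>simp add: z0 z1 Dk_const\<close>)
  have z3: "Dk 3 (Dk 3 (B 3)) = (\<lambda>_. 0)"
    by (rule ext, rule allp) (use JD'(2) in simp)
  have K0: "K = 0" using JC'(3)[of 0 0 0 0 0] z2 e gm by simp
  define F where "F = (\<lambda>z. B 3 (emb z))"
  have sF: "smooth F" unfolding F_def by (rule smooth_comp[OF sm linear_emb])
  define c5 where "c5 = Dk 3 (B 3) (0,0,0,0,0)"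
  have hB3: "B 3 = LF c5 F" unfolding F_def c5_def by (rule phase4[OF sm d4 z0 z1 z2 z3])
  have sw: "P3 2 (P3 0 (P3 0 F)) = P3 0 (P3 0 (P3 2 F))" "P3 2 (P3 1 (P3 1 F)) = P3 1 (P3 1 (P3 2 F))"
    using P3_swap[OF smooth_P3[OF sF], of 2 0 0] P3_swap[OF sF, of 2 0]
      P3_swap[OF smooth_P3[OF sF], of 2 1 1] P3_swap[OF sF, of 2 1] by simp_all
  have psi: "B 4 (x,y,t,u,f) = c5 * f + P3 2 (P3 2 F) (x,y,t)
                - \<epsilon> * (P3 0 (P3 0 (P3 2 F)) (x,y,t) + P3 1 (P3 1 (P3 2 F)) (x,y,t))
                - \<gamma> * (P3 0 (P3 0 F) (x,y,t) + P3 1 (P3 1 F) (x,y,t))" for x y t u f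
    using JD'(3)[where x=x and y=y and t=t and u=u and f=f] unfolding hB3 K0
    by (simp add: Dk_LF sF smooth_P3 LF_apply algebra_simps)
  have a_eq: "B 0 (x,y,t,u,f) = c1 * y + B 0 (0,0,0,0,0)" for x y t u f
    using fun_cong[OF hB0, of "(x,y,t,u,f)"] K0 by (simp add: aff5_apply)
  have b_eq: "B 1 (x,y,t,u,f) = - c1 * x + B 1 (0,0,0,0,0)" for x y t u f
    using fun_cong[OF hB1, of "(x,y,t,u,f)"] K0 by (simp add: aff5_apply)
  have c_eq: "B 2 (x,y,t,u,f) = B 2 (0,0,0,0,0)" for x y t u f
    using fun_cong[OF hB2, of "(x,y,t,u,f)"] K0 by (simp add: aff5_apply)
  have phi_eq: "B 3 (x,y,t,u,f) = c5 * u + F (x,y,t)" for x y t u f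
    unfolding hB3 by (simp add: LF_apply)
  have psi_eq: "B 4 (x,y,t,u,f) = c5 * f + pd 2 (pd 2 F) (x,y,t)
                - \<epsilon> * (pd 2 (pd 0 (pd 0 F)) (x,y,t) + pd 2 (pd 1 (pd 1 F)) (x,y,t))
                - \<gamma> * (pd 0 (pd 0 F) (x,y,t) + pd 1 (pd 1 F) (x,y,t))" for x y t u f
    unfolding psi by (simp add: pd_P3 sF smooth_P3 sw)
  show ?thesis
    apply (rule exI[of _ c1], rule exI[of _ "B 0 (0,0,0,0,0)"], rule exI[of _ "B 1 (0,0,0,0,0)"],
           rule exI[of _ "B 2 (0,0,0,0,0)"], rule exI[of _ c5], rule exI[of _ F])
    apply (intro conjI allI)
    by (rule sF a_eq b_eq c_eq phi_eq psi_eq)+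
qed

lemma basept_xyt: "basept (x,y,t) w = (x,y,t,w 0 (mi 0 0 0), w 1 (mi 0 0 0))"
  by (simp add: basept_def mi0_def)

lemma if_dir:
  assumes sF: "smooth F"
    and hB0: "B 0 = aff5 0 c1 0 0 0 c2" and hB1: "B 1 = aff5 (-c1) 0 0 0 0 c3" and hB2: "B 2 = aff5 0 0 0 0 0 c4"
    and hB3: "B 3 = LF c5 F"
    and hB4: "B 4 = (\<lambda>p. c5 * snd (snd (snd (snd p))) + (P3 2 (P3 2 F) (proj3 p)
        - \<epsilon> * (P3 0 (P3 0 (P3 2 F)) (proj3 p) + P3 1 (P3 1 (P3 2 F)) (proj3 p))
        - \<gamma> * (P3 0 (P3 0 F) (proj3 p) + P3 1 (P3 1 F) (proj3 p))))"
  shows "EE \<epsilon> \<gamma> B (x,y,t) w = c5 * eqn \<epsilon> \<gamma> (x,y,t) w"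
proof -
  note [simp] = EE_def PC_def charP0_def DP_def shiftm_def funpow_small evalT_def tsem_def basept_xyt
     hB0 hB1 hB2 hB3 Dk_aff5 Dk_const aff5_apply Dk_LF sF smooth_P3 LF_apply
  show ?thesis
    by (simp add: hB4 proj3_def eqn_def mi0_def algebra_simps)
qed


lemma P3_sw:
  assumes sF: "smooth F"
  shows "P3 2 (P3 0 (P3 0 F)) = P3 0 (P3 0 (P3 2 F))" "P3 2 (P3 1 (P3 1 F)) = P3 1 (P3 1 (P3 2 F))"
  using P3_swap[OF smooth_P3[OF sF], of 2 0 0] P3_swap[OF sF, of 2 0]
      P3_swap[OF smooth_P3[OF sF], of 2 1 1] P3_swap[OF sF, of 2 1] by simp_all

lemma pd_conv:
  assumes sF: "smooth F"
  shows "pd 2 (pd 2 F) = P3 2 (P3 2 F)" "pd 2 (pd 0 (pd 0 F)) = P3 0 (P3 0 (P3 2 F))"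
     "pd 2 (pd 1 (pd 1 F)) = P3 1 (P3 1 (P3 2 F))" "pd 0 (pd 0 F) = P3 0 (P3 0 F)" "pd 1 (pd 1 F) = P3 1 (P3 1 F)"
proof -
  have sw: "P3 2 (P3 0 (P3 0 F)) = P3 0 (P3 0 (P3 2 F))" "P3 2 (P3 1 (P3 1 F)) = P3 1 (P3 1 (P3 2 F))"
    using P3_swap[OF smooth_P3[OF sF], of 2 0 0] P3_swap[OF sF, of 2 0]
      P3_swap[OF smooth_P3[OF sF], of 2 1 1] P3_swap[OF sF, of 2 1] by simp_all
  show "pd 2 (pd 2 F) = P3 2 (P3 2 F)" "pd 2 (pd 0 (pd 0 F)) = P3 0 (P3 0 (P3 2 F))"
     "pd 2 (pd 1 (pd 1 F)) = P3 1 (P3 1 (P3 2 F))" "pd 0 (pd 0 F) = P3 0 (P3 0 F)" "pd 1 (pd 1 F) = P3 1 (P3 1 F)"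
    by (simp_all add: pd_P3 sF smooth_P3 sw)
qed

theorem mainTheorem1:
  fixes \<epsilon> \<gamma> :: real
    and xi1 xi2 xi3 phi1 phi2 :: "R5 \<Rightarrow> real"
  assumes "\<epsilon> \<noteq> 0" and "\<gamma> \<noteq> 0"
    and "smooth xi1" and "smooth xi2" and "smooth xi3" and "smooth phi1" and "smooth phi2"
  shows "is_point_symmetry 3 (eqn \<epsilon> \<gamma>) (vf xi1 xi2 xi3) (vf phi1 phi2 phi2)
     \<longleftrightarrow> (\<exists>c1 c2 c3 c4 c5 :: real. \<exists>F :: R3 \<Rightarrow> real. smooth F \<and>
          (\<forall>x y t u f.
             xi1 (x,y,t,u,f) = c1 * y + c2 \<and>
             xi2 (x,y,t,u,f) = - c1 * x + c3 \<and>
             xi3 (x,y,t,u,f) = c4 \<and>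
             phi1 (x,y,t,u,f) = c5 * u + F (x,y,t) \<and>
             phi2 (x,y,t,u,f) = c5 * f + pd 2 (pd 2 F) (x,y,t)
                - \<epsilon> * (pd 2 (pd 0 (pd 0 F)) (x,y,t) + pd 2 (pd 1 (pd 1 F)) (x,y,t))
                - \<gamma> * (pd 0 (pd 0 F) (x,y,t) + pd 1 (pd 1 F) (x,y,t))))"
proof -
  note e = assms(1) and gm = assms(2)
  define B where "B = BB (vf xi1 xi2 xi3) (vf phi1 phi2 phi2)"
  have B0: "B 0 = xi1" and B1: "B 1 = xi2" and B2: "B 2 = xi3" and B3: "B 3 = phi1" and B4: "B 4 = phi2"
    unfolding B_def BB_def vf_def by simp_all
  have sB: "smoothB B"
    unfolding smoothB_def B_def BB_def vf_def using assms(3-7) by auto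
  have iff: "is_point_symmetry 3 (eqn \<epsilon> \<gamma>) (vf xi1 xi2 xi3) (vf phi1 phi2 phi2) \<longleftrightarrow> Hyp \<epsilon> \<gamma> B"
    unfolding is_point_symmetry_def Hyp_def
    using prolong_eval[OF sB[unfolded B_def]] unfolding B_def by simp
  show ?thesis
  proof
    assume "is_point_symmetry 3 (eqn \<epsilon> \<gamma>) (vf xi1 xi2 xi3) (vf phi1 phi2 phi2)"
    then have H: "Hyp \<epsilon> \<gamma> B" using iff by simp
    show "\<exists>c1 c2 c3 c4 c5 :: real. \<exists>F :: R3 \<Rightarrow> real. smooth F \<and>
          (\<forall>x y t u f.
             xi1 (x,y,t,u,f) = c1 * y + c2 \<and>
             xi2 (x,y,t,u,f) = - c1 * x + c3 \<and>
             xi3 (x,y,t,u,f) = c4 \<and>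
             phi1 (x,y,t,u,f) = c5 * u + F (x,y,t) \<and>
             phi2 (x,y,t,u,f) = c5 * f + pd 2 (pd 2 F) (x,y,t)
                - \<epsilon> * (pd 2 (pd 0 (pd 0 F)) (x,y,t) + pd 2 (pd 1 (pd 1 F)) (x,y,t))
                - \<gamma> * (pd 0 (pd 0 F) (x,y,t) + pd 1 (pd 1 F) (x,y,t)))"
      using only_if[OF e gm sB H] unfolding B0 B1 B2 B3 B4 .
  next
    assume "\<exists>c1 c2 c3 c4 c5 :: real. \<exists>F :: R3 \<Rightarrow> real. smooth F \<and>
          (\<forall>x y t u f.
             xi1 (x,y,t,u,f) = c1 * y + c2 \<and>
             xi2 (x,y,t,u,f) = - c1 * x + c3 \<and>
             xi3 (x,y,t,u,f) = c4 \<and>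
             phi1 (x,y,t,u,f) = c5 * u + F (x,y,t) \<and>
             phi2 (x,y,t,u,f) = c5 * f + pd 2 (pd 2 F) (x,y,t)
                - \<epsilon> * (pd 2 (pd 0 (pd 0 F)) (x,y,t) + pd 2 (pd 1 (pd 1 F)) (x,y,t))
                - \<gamma> * (pd 0 (pd 0 F) (x,y,t) + pd 1 (pd 1 F) (x,y,t)))"
    then obtain c1 c2 c3 c4 c5 F where sF: "smooth F" and hyp: "\<forall>x y t u f.
             xi1 (x,y,t,u,f) = c1 * y + c2 \<and>
             xi2 (x,y,t,u,f) = - c1 * x + c3 \<and>
             xi3 (x,y,t,u,f) = c4 \<and>
             phi1 (x,y,t,u,f) = c5 * u + F (x,y,t) \<and>
             phi2 (x,y,t,u,f) = c5 * f + pd 2 (pd 2 F) (x,y,t)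
                - \<epsilon> * (pd 2 (pd 0 (pd 0 F)) (x,y,t) + pd 2 (pd 1 (pd 1 F)) (x,y,t))
                - \<gamma> * (pd 0 (pd 0 F) (x,y,t) + pd 1 (pd 1 F) (x,y,t))" by blast
    have hB0: "B 0 = aff5 0 c1 0 0 0 c2"
      unfolding B0 by (rule ext, rule allp) (simp add: hyp aff5_apply)
    have hB1: "B 1 = aff5 (-c1) 0 0 0 0 c3"
      unfolding B1 by (rule ext, rule allp) (simp add: hyp aff5_apply)
    have hB2: "B 2 = aff5 0 0 0 0 0 c4"
      unfolding B2 by (rule ext, rule allp) (simp add: hyp aff5_apply)
    have hB3: "B 3 = LF c5 F"
      unfolding B3 by (rule ext, rule allp) (simp add: hyp LF_apply)
    have hB4: "B 4 = (\<lambda>p. c5 * snd (snd (snd (snd p))) + (P3 2 (P3 2 F) (proj3 p)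
        - \<epsilon> * (P3 0 (P3 0 (P3 2 F)) (proj3 p) + P3 1 (P3 1 (P3 2 F)) (proj3 p))
        - \<gamma> * (P3 0 (P3 0 F) (proj3 p) + P3 1 (P3 1 F) (proj3 p))))"
      unfolding B4 by (rule ext, rule allp) (simp add: hyp pd_P3 sF smooth_P3 P3_sw[OF sF] proj3_def)
    have "Hyp \<epsilon> \<gamma> B"
      unfolding Hyp_def
    proof (intro allI impI)
      fix z w assume "eqn \<epsilon> \<gamma> z w = 0"
      moreover obtain x y t where "z = (x,y,t)" by (cases z) auto
      ultimately show "EE \<epsilon> \<gamma> B z w = 0" using if_dir[OF sF hB0 hB1 hB2 hB3 hB4] by simp
    qed
    then show "is_point_symmetry 3 (eqn \<epsilon> \<gamma>) (vf xi1 xi2 xi3) (vf phi1 phi2 phi2)" using iff by simp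
  qed
qed

end
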